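(* Let $k\ge 1$. A graph $F$ has a path decomposition of width at most $k$ if and only if $F$ has a $k$-simplicial walk that is decomposing in $F$.
   Context: Graphs are finite and undirected. A path decomposition of $F$ is a path $P$ with bags $\beta(t)\subseteq V(F)$, $t\in V(P)$, such that every edge of $F$ is contained in some bag and for every $v\in V(F)$ the set of nodes whose bags contain $v$ induces a nonempty connected subpath; its width is $\max_t|\beta(t)|-1$. A $k$-simplicial walk of length $t$ in $F$ is a sequence $(\sigma_1,\dots,\sigma_t)$ of nonempty subsets of $V(F)$ of size at most $k+1$ with $|\sigma_1|=1$ such that for each $i\in[t-1]$ there is a vertex $u$ with $\sigma_{i+1}=\sigma_i\sqcup\{u\}$ ($u$ is incoming at step $i+1$) or $\sigma_i=\sigma_{i+1}\sqcup\{u\}$ ($u$ is outgoing); the vertex of $\sigma_1$ counts as incoming at step 1. It is decomposing in $F$ if (D1) every vertex of $F$ is incoming exactly once, and (D2) every edge $uv\in E(F)$ is contained in at least one $\sigma_i$. *)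

theory Defs
  imports Main
begin

definition graph :: "'a set \<Rightarrow> 'a set set \<Rightarrow> bool" where
  "graph V E \<longleftrightarrow> finite V \<and> (\<forall>e\<in>E. e \<subseteq> V \<and> card e = 2)"

definition path_decomposition :: "'a set \<Rightarrow> 'a set set \<Rightarrow> 'a set list \<Rightarrow> bool" where
  "path_decomposition V E bs \<longleftrightarrow>
     bs \<noteq> [] \<and>
     (\<forall>t<length bs. bs ! t \<subseteq> V) \<and>
     (\<forall>e\<in>E. \<exists>t<length bs. e \<subseteq> bs ! t) \<and>
     (\<forall>v\<in>V. (\<exists>t<length bs. v \<in> bs ! t) \<and>
        (\<forall>s t u. s \<le> t \<and> t \<le> u \<and> u < length bs \<and> v \<in> bs ! s \<and> v \<in> bs ! u \<longrightarrow> v \<in> bs ! t))"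

definition has_path_decomposition_of_width_le :: "'a set \<Rightarrow> 'a set set \<Rightarrow> nat \<Rightarrow> bool" where
  "has_path_decomposition_of_width_le V E k \<longleftrightarrow>
     (\<exists>bs. path_decomposition V E bs \<and> (\<forall>t<length bs. card (bs ! t) \<le> k + 1))"

text \<open>A k-simplicial walk in the graph with vertex set V: sigma_1, ..., sigma_t is the list ss
  (0-indexed), of length t >= 1.\<close>
definition simplicial_walk :: "'a set \<Rightarrow> nat \<Rightarrow> 'a set list \<Rightarrow> bool" where
  "simplicial_walk V k ss \<longleftrightarrow>
     ss \<noteq> [] \<and>
     (\<forall>i<length ss. ss ! i \<noteq> {} \<and> ss ! i \<subseteq> V \<and> finite (ss ! i) \<and> card (ss ! i) \<le> k + 1) \<and>
     card (ss ! 0) = 1 \<and>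
     (\<forall>i. Suc i < length ss \<longrightarrow>
        (\<exists>u. (u \<notin> ss ! i \<and> ss ! Suc i = insert u (ss ! i)) \<or>
             (u \<notin> ss ! Suc i \<and> ss ! i = insert u (ss ! Suc i))))"

definition incoming :: "'a set list \<Rightarrow> nat \<Rightarrow> 'a \<Rightarrow> bool" where
  "incoming ss i v \<longleftrightarrow>
     (i = 0 \<and> ss \<noteq> [] \<and> ss ! 0 = {v}) \<or>
     (0 < i \<and> i < length ss \<and> v \<notin> ss ! (i - 1) \<and> ss ! i = insert v (ss ! (i - 1)))"

definition decomposing :: "'a set \<Rightarrow> 'a set set \<Rightarrow> 'a set list \<Rightarrow> bool" where
  "decomposing V E ss \<longleftrightarrow>
     (\<forall>v\<in>V. card {i. i < length ss \<and> incoming ss i v} = 1) \<and>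
     (\<forall>e\<in>E. \<exists>i<length ss. e \<subseteq> ss ! i)"

end

theory Submission
  imports Defs
begin

definition stp :: "'a set \<Rightarrow> 'a set \<Rightarrow> bool" where
  "stp X Y \<longleftrightarrow> (\<exists>u. (u \<notin> X \<and> Y = insert u X) \<or> (u \<notin> Y \<and> X = insert u Y))"

definition cnv :: "'a set list \<Rightarrow> 'a \<Rightarrow> bool" where
  "cnv xs v \<longleftrightarrow> (\<forall>s t u. s \<le> t \<and> t \<le> u \<and> u < length xs \<and> v \<in> xs ! s \<and> v \<in> xs ! u \<longrightarrow> v \<in> xs ! t)"

lemma cnv_append:
  assumes "cnv xs v" "cnv ys v"
    and "(\<exists>X\<in>set xs. v \<in> X) \<Longrightarrow> (\<exists>Y\<in>set ys. v \<in> Y) \<Longrightarrow> v \<in> last xs \<and> v \<in> hd ys"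
  shows "cnv (xs @ ys) v"
  unfolding cnv_def
proof (intro allI impI)
  fix s t u assume h: "s \<le> t \<and> t \<le> u \<and> u < length (xs @ ys) \<and> v \<in> (xs @ ys) ! s \<and> v \<in> (xs @ ys) ! u"
  show "v \<in> (xs @ ys) ! t"
  proof (cases "u < length xs")
    case True
    have lt: "s < length xs" "t < length xs" using True h by auto
    then have "v \<in> xs ! s" "v \<in> xs ! u" using h True by (auto simp: nth_append)
    then have "v \<in> xs ! t" using assms(1) h True unfolding cnv_def by blast
    then show ?thesis using lt by (simp add: nth_append)
  next
    case u: False
    show ?thesis
    proof (cases "s < length xs")
      case s: True
      have vx: "\<exists>X\<in>set xs. v \<in> X" using s h by (auto simp: nth_append)
      have vy: "\<exists>Y\<in>set ys. v \<in> Y" using u h by (force simp: nth_append)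
      from assms(3)[OF vx vy] have l: "v \<in> last xs" and hh: "v \<in> hd ys" by auto
      have xne: "xs \<noteq> []" "ys \<noteq> []" using s u h by auto
      show ?thesis
      proof (cases "t < length xs")
        case True
        have "v \<in> xs ! (length xs - 1)" using l xne by (simp add: last_conv_nth)
        have "s \<le> t" "t \<le> length xs - 1" "length xs - 1 < length xs" "v \<in> xs ! s" using True h s xne by (auto simp: nth_append)
        then have "v \<in> xs ! t" using assms(1) `v \<in> xs ! (length xs - 1)` unfolding cnv_def by blast
        then show ?thesis using True by (simp add: nth_append)
      next
        case False
        have "v \<in> ys ! 0" using hh xne by (simp add: hd_conv_nth)
        have "0 \<le> t - length xs" "t - length xs \<le> u - length xs" "u - length xs < length ys" "v \<in> ys ! (u - length xs)" using False u h by (auto simp: nth_append)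
        then have "v \<in> ys ! (t - length xs)" using assms(2) `v \<in> ys ! 0` unfolding cnv_def by blast
        then show ?thesis using False by (simp add: nth_append)
      qed
    next
      case False
      have "s - length xs \<le> t - length xs" "t - length xs \<le> u - length xs" "u - length xs < length ys" "v \<in> ys ! (u - length xs)" "v \<in> ys ! (s - length xs)" "\<not> t < length xs" using False u h by (auto simp: nth_append)
      then have "v \<in> ys ! (t - length xs)" using assms(2) unfolding cnv_def by blast
      then show ?thesis using `\<not> t < length xs` by (simp add: nth_append)
    qed
  qed
qed

lemma cnv_tl: "cnv ys v \<Longrightarrow> cnv (tl ys) v"
  unfolding cnv_def
proof (intro allI impI)
  fix s t u assume c: "\<forall>s t u. s \<le> t \<and> t \<le> u \<and> u < length ys \<and> v \<in> ys ! s \<and> v \<in> ys ! u \<longrightarrow> v \<in> ys ! t"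
    and h: "s \<le> t \<and> t \<le> u \<and> u < length (tl ys) \<and> v \<in> tl ys ! s \<and> v \<in> tl ys ! u"
  have "ys \<noteq> []" using h by auto
  then have e: "\<And>i. tl ys ! i = ys ! Suc i" by (cases ys) auto
  show "v \<in> tl ys ! t" using c[rule_format, of "Suc s" "Suc t" "Suc u"] h unfolding e by auto
qed

lemma cnv_join:
  assumes "xs \<noteq> []" "ys \<noteq> []" "last xs = hd ys" "cnv xs v" "cnv ys v"
    and "v \<in> last xs \<or> \<not>(\<exists>X\<in>set xs. v\<in>X) \<or> \<not>(\<exists>Y\<in>set ys. v\<in>Y)"
  shows "cnv (xs @ tl ys) v"
proof (rule cnv_append[OF assms(4) cnv_tl[OF assms(5)]])
  assume a: "\<exists>X\<in>set xs. v \<in> X" "\<exists>Y\<in>set (tl ys). v \<in> Y"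
  have "\<exists>Y\<in>set ys. v \<in> Y" using a(2) assms(2) by (cases ys) auto
  then have l: "v \<in> last xs" using assms(6) a(1) by auto
  then have h0: "v \<in> ys ! 0" using assms(2,3) by (simp add: hd_conv_nth)
  obtain j where j: "j < length (tl ys)" "v \<in> tl ys ! j" using a(2) by (auto simp: in_set_conv_nth)
  have e: "\<And>i. tl ys ! i = ys ! Suc i" using assms(2) by (cases ys) auto
  have j': "Suc j < length ys" "v \<in> ys ! Suc j" using j e by auto
  have "v \<in> ys ! 1" using assms(5)[unfolded cnv_def, rule_format, of 0 1 "Suc j"] h0 j' by simp
  moreover have "hd (tl ys) = ys ! 1"
  proof -
    have "tl ys \<noteq> []"
    proof
      assume "tl ys = []" then show False using j(1) by simp
    qed
    then show ?thesis using e by (simp add: hd_conv_nth)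
  qed
  ultimately show "v \<in> last xs \<and> v \<in> hd (tl ys)" using l by simp
qed

lemma cnv_up: "sorted_wrt (\<subseteq>) xs \<Longrightarrow> cnv xs v"
  unfolding cnv_def
proof (intro allI impI)
  fix s t u assume a: "sorted_wrt (\<subseteq>) xs" and h: "s \<le> t \<and> t \<le> u \<and> u < length xs \<and> v \<in> xs ! s \<and> v \<in> xs ! u"
  show "v \<in> xs ! t"
  proof (cases "s = t")
    case True then show ?thesis using h by simp
  next
    case False
    then have "xs ! s \<subseteq> xs ! t" using a h unfolding sorted_wrt_iff_nth_less by simp
    then show ?thesis using h by blast
  qed
qed

lemma cnv_down: "sorted_wrt (\<supseteq>) xs \<Longrightarrow> cnv xs v"
  unfolding cnv_def
proof (intro allI impI)
  fix s t u assume a: "sorted_wrt (\<supseteq>) xs" and h: "s \<le> t \<and> t \<le> u \<and> u < length xs \<and> v \<in> xs ! s \<and> v \<in> xs ! u"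
  show "v \<in> xs ! t"
  proof (cases "t = u")
    case True then show ?thesis using h by simp
  next
    case False
    then have "xs ! u \<subseteq> xs ! t" using a h unfolding sorted_wrt_iff_nth_less by simp
    then show ?thesis using h by blast
  qed
qed

lemma succ_join:
  assumes "successively stp xs" "successively stp ys" "xs \<noteq> []" "ys \<noteq> []" "last xs = hd ys"
  shows "successively stp (xs @ tl ys)"
proof -
  obtain y ys' where y: "ys = y # ys'" using assms(4) by (cases ys) auto
  show ?thesis using assms unfolding y by (auto simp: successively_append_iff successively_Cons)
qed

lemma remove_chain:
  assumes "finite R" "R \<subseteq> B" "B - R \<noteq> {}"
  shows "\<exists>xs. xs \<noteq> [] \<and> hd xs = B \<and> last xs = B - R \<and> successively stp xs \<and> sorted_wrt (\<supseteq>) xs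
     \<and> (\<forall>X\<in>set xs. B - R \<subseteq> X \<and> X \<subseteq> B)"
  using assms
proof (induction R rule: finite_induct)
  case empty
  then show ?case by (intro exI[of _ "[B]"]) auto
next
  case (insert r R)
  then obtain xs where xs: "xs \<noteq> [] \<and> hd xs = B \<and> last xs = B - R \<and> successively stp xs \<and> sorted_wrt (\<supseteq>) xs
     \<and> (\<forall>X\<in>set xs. B - R \<subseteq> X \<and> X \<subseteq> B)" by auto
  have st: "stp (B - R) (B - insert r R)" unfolding stp_def
    by (rule exI[of _ r]) (use insert in auto)
  show ?case
    apply (rule exI[of _ "xs @ [B - insert r R]"])
    using xs st by (auto simp: successively_append_iff sorted_wrt_append)
qed

lemma add_chain:
  assumes "finite A"
  shows "\<exists>xs. xs \<noteq> [] \<and> hd xs = B \<and> last xs = B \<union> A \<and> successively stp xs \<and> sorted_wrt (\<subseteq>) xs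
     \<and> (\<forall>X\<in>set xs. B \<subseteq> X \<and> X \<subseteq> B \<union> A)"
  using assms
proof (induction A rule: finite_induct)
  case empty
  then show ?case by (intro exI[of _ "[B]"]) auto
next
  case (insert r A)
  then obtain xs where xs: "xs \<noteq> [] \<and> hd xs = B \<and> last xs = B \<union> A \<and> successively stp xs \<and> sorted_wrt (\<subseteq>) xs
     \<and> (\<forall>X\<in>set xs. B \<subseteq> X \<and> X \<subseteq> B \<union> A)" by auto
  show ?case
  proof (cases "r \<in> B")
    case True
    then have "B \<union> insert r A = B \<union> A" by auto
    then show ?thesis using xs by metis
  next
    case False
    have st: "stp (B \<union> A) (B \<union> insert r A)" unfolding stp_def
      by (rule exI[of _ r]) (use insert False in auto)
    show ?thesis
      apply (rule exI[of _ "xs @ [B \<union> insert r A]"])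
      using xs st by (auto simp: successively_append_iff sorted_wrt_append)
  qed
qed

lemma set_join: "xs \<noteq> [] \<Longrightarrow> set (xs @ tl ys) \<subseteq> set xs \<union> set ys"
  by (cases ys) auto

lemma last_join: "xs \<noteq> [] \<Longrightarrow> ys \<noteq> [] \<Longrightarrow> last xs = hd ys \<Longrightarrow> last (xs @ tl ys) = last ys"
  by (cases ys) auto

lemma hd_join: "xs \<noteq> [] \<Longrightarrow> hd (xs @ tl ys) = hd xs"
  by (cases xs) auto

lemma transition:
  assumes "finite B" "finite C" "B \<noteq> {}" "C \<noteq> {}" "card B \<le> k + 1" "card C \<le> k + 1" "1 \<le> k"
  shows "\<exists>ys. ys \<noteq> [] \<and> hd ys = B \<and> last ys = C \<and> successively stp ys \<and>
     (\<forall>X\<in>set ys. X \<noteq> {} \<and> X \<subseteq> B \<union> C \<and> card X \<le> k + 1) \<and> (\<forall>v. cnv ys v)"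
proof (cases "B \<inter> C = {}")
  case False
  obtain r where r: "r \<noteq> [] \<and> hd r = B \<and> last r = B - (B - C) \<and> successively stp r \<and> sorted_wrt (\<supseteq>) r
     \<and> (\<forall>X\<in>set r. B - (B - C) \<subseteq> X \<and> X \<subseteq> B)"
    using remove_chain[of "B - C" B] assms False by auto
  obtain a where a: "a \<noteq> [] \<and> hd a = B \<inter> C \<and> last a = B \<inter> C \<union> (C - B) \<and> successively stp a \<and> sorted_wrt (\<subseteq>) a
     \<and> (\<forall>X\<in>set a. B \<inter> C \<subseteq> X \<and> X \<subseteq> B \<inter> C \<union> (C - B))"
    using add_chain[of "C - B" "B \<inter> C"] assms by auto
  have e1: "B - (B - C) = B \<inter> C" "B \<inter> C \<union> (C - B) = C" by auto
  have cr: "\<forall>X\<in>set r. card X \<le> k + 1" using r assms(1,5) by (meson card_mono le_trans)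
  have ca: "\<forall>X\<in>set a. card X \<le> k + 1" using a assms(2,6) e1 by (metis card_mono le_trans)
  show ?thesis
  proof (intro exI[of _ "r @ tl a"] conjI allI ballI)
    show "r @ tl a \<noteq> []" "hd (r @ tl a) = B" using r by (auto simp: hd_join)
    show "last (r @ tl a) = C" using r a e1 by (simp add: last_join)
    show "successively stp (r @ tl a)" using r a e1 by (intro succ_join) auto
    fix X assume "X \<in> set (r @ tl a)"
    then have "X \<in> set r \<or> X \<in> set a" using set_join[of r a] r by auto
    then show "X \<noteq> {}" "X \<subseteq> B \<union> C" "card X \<le> k + 1" using r a e1 cr ca False by auto
  next
    fix v
    show "cnv (r @ tl a) v"
    proof (rule cnv_join)
      have "\<forall>X\<in>set r. X \<subseteq> B" "\<forall>Y\<in>set a. Y \<subseteq> C" "last r = B \<inter> C" using r a e1 by auto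
      then show "v \<in> last r \<or> \<not>(\<exists>X\<in>set r. v\<in>X) \<or> \<not>(\<exists>Y\<in>set a. v\<in>Y)"
        by blast
    qed (use r a e1 cnv_up[of a] cnv_down[of r] in auto)
  qed
next
  case True
  obtain x where x: "x \<in> B" using assms by auto
  obtain y where y: "y \<in> C" using assms by auto
  have xy: "x \<noteq> y" using True x y by auto
  obtain r where r: "r \<noteq> [] \<and> hd r = B \<and> last r = B - (B - {x}) \<and> successively stp r \<and> sorted_wrt (\<supseteq>) r
     \<and> (\<forall>X\<in>set r. B - (B - {x}) \<subseteq> X \<and> X \<subseteq> B)"
    using remove_chain[of "B - {x}" B] assms x by auto
  obtain a where a: "a \<noteq> [] \<and> hd a = {y} \<and> last a = {y} \<union> (C - {y}) \<and> successively stp a \<and> sorted_wrt (\<subseteq>) a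
     \<and> (\<forall>X\<in>set a. {y} \<subseteq> X \<and> X \<subseteq> {y} \<union> (C - {y}))"
    using add_chain[of "C - {y}" "{y}"] assms by auto
  have e1: "B - (B - {x}) = {x}" "{y} \<union> (C - {y}) = C" using x y by auto
  define m where "m = [{x}, {x,y}, {y}]"
  have s1: "stp {x} {x,y}" unfolding stp_def using xy by (intro exI[of _ y]) auto
  have s2: "stp {x,y} {y}" unfolding stp_def using xy by (intro exI[of _ x]) auto
  have sm: "successively stp m" unfolding m_def using s1 s2 by simp
  have cm: "cnv m v" for v
    unfolding cnv_def m_def by (auto simp: nth_Cons' less_Suc_eq numeral_eq_Suc)
  have cr: "\<forall>X\<in>set r. card X \<le> k + 1" using r assms(1,5) by (meson card_mono le_trans)
  have ca: "\<forall>X\<in>set a. card X \<le> k + 1" using a assms(2,6) e1 by (metis card_mono le_trans)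
  have ccm: "\<forall>X\<in>set m. card X \<le> k + 1" unfolding m_def using assms(7) by (auto simp: card_insert_if)
  let ?rm = "r @ tl m"
  have rm: "?rm \<noteq> []" "last ?rm = {y}" "successively stp ?rm" "hd ?rm = B"
    using r sm e1 unfolding m_def by (auto simp: successively_append_iff)
  have rmset: "\<forall>X\<in>set ?rm. X \<noteq> {} \<and> X \<subseteq> B \<union> {y} \<and> card X \<le> k + 1"
    using r e1 cr ccm x unfolding m_def by auto
  have crm: "cnv ?rm v" for v
  proof (rule cnv_join)
    have "\<forall>X\<in>set r. X \<subseteq> B" "last r = {x}" "\<forall>Y\<in>set m. Y \<subseteq> {x,y}" "y \<notin> B"
      using r e1 True y unfolding m_def by auto
    then show "v \<in> last r \<or> \<not>(\<exists>X\<in>set r. v\<in>X) \<or> \<not>(\<exists>Y\<in>set m. v\<in>Y)"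
      by blast
  qed (use r e1 cnv_down[of r] cm in \<open>auto simp: m_def\<close>)
  show ?thesis
  proof (intro exI[of _ "?rm @ tl a"] conjI allI ballI)
    show "?rm @ tl a \<noteq> []" using rm(1) by (metis append_is_Nil_conv)
    show "hd (?rm @ tl a) = B" by (simp only: hd_join[OF rm(1)] rm(4))
    have a1: "a \<noteq> []" and a3: "last a = C" using a e1 by auto
    have a2: "last ?rm = hd a" by (subst rm(2)) (use a in simp)
    show "last (?rm @ tl a) = C" using last_join[OF rm(1) a1 a2] a3 by (rule trans)
    have a4: "successively stp a" using a by (elim conjE) assumption
    have a6: "\<forall>X\<in>set a. {y} \<subseteq> X \<and> X \<subseteq> {y} \<union> (C - {y})" using a by (elim conjE) assumption
    have a7: "sorted_wrt (\<subseteq>) a" using a by (elim conjE) assumption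
    have a5: "\<forall>X\<in>set a. y \<in> X \<and> X \<subseteq> C" using a6 e1(2) by auto
    show "successively stp (?rm @ tl a)" by (rule succ_join[OF rm(3) a4 rm(1) a1 a2])
    fix X assume "X \<in> set (?rm @ tl a)"
    then have XX: "X \<in> set ?rm \<or> X \<in> set a" using set_join[OF rm(1), of a] by blast
    show "X \<noteq> {}" using XX rmset a5 by blast
    show "X \<subseteq> B \<union> C" using XX rmset a5 y by blast
    show "card X \<le> k + 1" using XX rmset ca by blast
  next
    fix v
    have a5: "\<forall>X\<in>set a. X \<subseteq> C" using a e1 by auto
    have a7: "sorted_wrt (\<subseteq>) a" using a by (elim conjE) assumption
    have a1: "a \<noteq> []" using a by (elim conjE) assumption
    have a2: "last ?rm = hd a" by (subst rm(2)) (use a in simp)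
    show "cnv (?rm @ tl a) v"
    proof (rule cnv_join)
      have "\<forall>X\<in>set ?rm. X \<subseteq> B \<union> {y}" using rmset by blast
      then show "v \<in> last ?rm \<or> \<not>(\<exists>X\<in>set ?rm. v\<in>X) \<or> \<not>(\<exists>Y\<in>set a. v\<in>Y)"
        using rm(2) a5 True by blast
    qed (use rm(1) a1 a2 cnv_up[OF a7] crm in auto)
  qed
qed

lemma cnv_prefix: "cnv (xs @ ys) v \<Longrightarrow> cnv xs v"
  unfolding cnv_def
proof (intro allI impI)
  fix s t u assume c: "\<forall>s t u. s \<le> t \<and> t \<le> u \<and> u < length (xs @ ys) \<and> v \<in> (xs @ ys) ! s \<and> v \<in> (xs @ ys) ! u \<longrightarrow> v \<in> (xs @ ys) ! t"
    and h: "s \<le> t \<and> t \<le> u \<and> u < length xs \<and> v \<in> xs ! s \<and> v \<in> xs ! u"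
  show "v \<in> xs ! t" using c[rule_format, of s t u] h by (auto simp: nth_append)
qed

lemma build:
  assumes "\<forall>v. cnv bs v" "\<forall>X\<in>set bs. finite X \<and> card X \<le> k+1" "1 \<le> k" "\<Union>(set bs) \<noteq> {}"
  shows "\<exists>ss j. ss \<noteq> [] \<and> successively stp ss \<and> card (hd ss) = 1 \<and>
    (\<forall>X\<in>set ss. X \<noteq> {} \<and> finite X \<and> card X \<le> k+1 \<and> X \<subseteq> \<Union>(set bs)) \<and> \<Union>(set ss) = \<Union>(set bs) \<and>
    (\<forall>X\<in>set bs. X \<noteq> {} \<longrightarrow> X \<in> set ss) \<and> (\<forall>v. cnv ss v) \<and> j < length bs \<and> last ss = bs ! j \<and>
    (\<forall>i. j < i \<and> i < length bs \<longrightarrow> bs ! i = {})"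
  using assms
proof (induction bs rule: rev_induct)
  case Nil
  then show ?case by simp
next
  case (snoc C bs)
  have cb: "\<forall>v. cnv bs v" using cnv_prefix[of bs "[C]"] snoc.prems(1) by blast
  have fb: "\<forall>X\<in>set bs. finite X \<and> card X \<le> k+1" using snoc.prems(2) by auto
  have fC: "finite C" "card C \<le> k + 1" using snoc.prems(2) by auto
  show ?case
  proof (cases "\<Union>(set bs) = {}")
    case True
    then have Cne: "C \<noteq> {}" using snoc.prems(4) by auto
    then obtain y where y: "y \<in> C" by auto
    obtain a where a: "a \<noteq> [] \<and> hd a = {y} \<and> last a = {y} \<union> (C - {y}) \<and> successively stp a \<and> sorted_wrt (\<subseteq>) a
     \<and> (\<forall>X\<in>set a. {y} \<subseteq> X \<and> X \<subseteq> {y} \<union> (C - {y}))"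
      using add_chain[of "C - {y}" "{y}"] fC by auto
    have e: "{y} \<union> (C - {y}) = C" using y by auto
    have fa: "\<forall>X\<in>set a. X \<noteq> {} \<and> finite X \<and> card X \<le> k+1 \<and> X \<subseteq> C"
      using a e fC by (metis card_mono empty_iff finite_subset insert_subset le_trans)
    have "C \<in> set a" using a e by (metis last_in_set)
    then have ua: "\<Union>(set a) = C" using fa by auto
    have bs0: "\<forall>X\<in>set bs. X = {}" using True by auto
    show ?thesis
    proof (intro exI[of _ a] exI[of _ "length bs"] conjI allI impI ballI)
      show "a \<noteq> []" "successively stp a" "card (hd a) = 1" using a by auto
      fix X assume "X \<in> set a"
      then show "X \<noteq> {}" "finite X" "card X \<le> k+1" "X \<subseteq> \<Union>(set (bs @ [C]))" using fa by auto
    next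
      show "\<Union>(set a) = \<Union>(set (bs @ [C]))" using ua True by auto
    next
      fix X assume "X \<in> set (bs @ [C])" "X \<noteq> {}"
      then show "X \<in> set a" using bs0 \<open>C \<in> set a\<close> by auto
    next
      fix v show "cnv a v" using a cnv_up[of a] by blast
    next
      show "length bs < length (bs @ [C])" by simp
      show "last a = (bs @ [C]) ! length bs" using a e by simp
    next
      fix i assume "length bs < i \<and> i < length (bs @ [C])"
      then have "i < Suc (length bs)" "length bs < i" by simp_all
      then show "(bs @ [C]) ! i = {}" by linarith
    qed
  next
    case False
    from snoc.IH[OF cb fb snoc.prems(3) False] obtain ss where "\<exists>j. ss \<noteq> [] \<and> successively stp ss \<and> card (hd ss) = 1 \<and>
      (\<forall>X\<in>set ss. X \<noteq> {} \<and> finite X \<and> card X \<le> k+1 \<and> X \<subseteq> \<Union>(set bs)) \<and> \<Union>(set ss) = \<Union>(set bs) \<and>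
      (\<forall>X\<in>set bs. X \<noteq> {} \<longrightarrow> X \<in> set ss) \<and> (\<forall>v. cnv ss v) \<and> j < length bs \<and> last ss = bs ! j \<and>
      (\<forall>i. j < i \<and> i < length bs \<longrightarrow> bs ! i = {})" by (rule exE)
    then obtain j where ih: "ss \<noteq> [] \<and> successively stp ss \<and> card (hd ss) = 1 \<and>
      (\<forall>X\<in>set ss. X \<noteq> {} \<and> finite X \<and> card X \<le> k+1 \<and> X \<subseteq> \<Union>(set bs)) \<and> \<Union>(set ss) = \<Union>(set bs) \<and>
      (\<forall>X\<in>set bs. X \<noteq> {} \<longrightarrow> X \<in> set ss) \<and> (\<forall>v. cnv ss v) \<and> j < length bs \<and> last ss = bs ! j \<and>
      (\<forall>i. j < i \<and> i < length bs \<longrightarrow> bs ! i = {})" by (rule exE)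
    have i1: "ss \<noteq> []" using ih by (elim conjE) assumption
    have i2: "successively stp ss" using ih by (elim conjE) assumption
    have i3: "card (hd ss) = 1" using ih by (elim conjE) assumption
    have i4: "\<forall>X\<in>set ss. X \<noteq> {} \<and> finite X \<and> card X \<le> k+1 \<and> X \<subseteq> \<Union>(set bs)" using ih by (elim conjE) assumption
    have i5: "\<Union>(set ss) = \<Union>(set bs)" using ih by (elim conjE) assumption
    have i6: "\<forall>X\<in>set bs. X \<noteq> {} \<longrightarrow> X \<in> set ss" using ih by (elim conjE) assumption
    have i7: "\<forall>v. cnv ss v" using ih by (elim conjE) assumption
    have i8: "j < length bs" using ih by (elim conjE) assumption
    have i9: "last ss = bs ! j" using ih by (elim conjE) assumption
    have i10: "\<forall>i. j < i \<and> i < length bs \<longrightarrow> bs ! i = {}" using ih by (elim conjE) assumption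
    show ?thesis
    proof (cases "C = {}")
      case True
      show ?thesis
      proof (intro exI[of _ ss] exI[of _ j] conjI allI impI ballI)
        show "ss \<noteq> []" "successively stp ss" "card (hd ss) = 1" by (fact i1, fact i2, fact i3)
        fix X assume "X \<in> set ss"
        then show "X \<noteq> {}" "finite X" "card X \<le> k+1" "X \<subseteq> \<Union>(set (bs @ [C]))" using i4 by auto
      next
        show "\<Union>(set ss) = \<Union>(set (bs @ [C]))" using i5 True by simp
      next
        fix X assume "X \<in> set (bs @ [C])" "X \<noteq> {}"
        then show "X \<in> set ss" using i6 True by auto
      next
        fix v show "cnv ss v" using i7 by blast
      next
        show "j < length (bs @ [C])" using i8 by simp
        show "last ss = (bs @ [C]) ! j" using i8 i9 by (simp add: nth_append)
      next
        fix i assume a: "j < i \<and> i < length (bs @ [C])"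
        show "(bs @ [C]) ! i = {}"
        proof (cases "i < length bs")
          case True then show ?thesis using a i10 by (simp add: nth_append)
        next
          case False then have "i = length bs" using a by simp
          then show ?thesis using True by simp
        qed
      qed
    next
      case Cne: False
      define B where "B = last ss"
      have Bin: "B \<in> set ss" using i1 B_def by simp
      have fB: "finite B" "B \<noteq> {}" "card B \<le> k + 1" using i4 Bin by auto
      have key: "v \<in> B" if "v \<in> \<Union>(set bs)" "v \<in> C" for v
      proof -
        from that(1) obtain X where X: "X \<in> set bs" "v \<in> X" by blast
        from X(1) obtain i where i0: "i < length bs" "X = bs ! i" by (metis in_set_conv_nth)
        have i: "i < length bs" "v \<in> bs ! i" using i0 X by auto
        have "i \<le> j"
        proof (rule ccontr)
          assume "\<not> i \<le> j" then have "bs ! i = {}" using i10 i by auto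
          then show False using i by auto
        qed
        have "i \<le> j" "j \<le> length bs" "length bs < length (bs @ [C])" "v \<in> (bs @ [C]) ! i" "v \<in> (bs @ [C]) ! length bs"
          using \<open>i \<le> j\<close> i i8 that(2) by (auto simp: nth_append)
        then have "v \<in> (bs @ [C]) ! j" using snoc.prems(1)[rule_format, of v] unfolding cnv_def by blast
        then show "v \<in> B" using i8 i9 B_def by (simp add: nth_append)
      qed
      from transition[OF fB(1) fC(1) fB(2) Cne fB(3) fC(2) snoc.prems(3)]
      obtain ys where ys: "ys \<noteq> [] \<and> hd ys = B \<and> last ys = C \<and> successively stp ys \<and>
        (\<forall>X\<in>set ys. X \<noteq> {} \<and> X \<subseteq> B \<union> C \<and> card X \<le> k + 1) \<and> (\<forall>v. cnv ys v)" by (rule exE)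
      have y1: "ys \<noteq> []" using ys by (elim conjE) assumption
      have y2: "hd ys = B" using ys by (elim conjE) assumption
      have y3: "last ys = C" using ys by (elim conjE) assumption
      have y4: "successively stp ys" using ys by (elim conjE) assumption
      have y5: "\<forall>X\<in>set ys. X \<noteq> {} \<and> X \<subseteq> B \<union> C \<and> card X \<le> k + 1" using ys by (elim conjE) assumption
      have y6: "\<forall>v. cnv ys v" using ys by (elim conjE) assumption
      have fys: "\<forall>X\<in>set ys. finite X" using y5 fB fC by (meson finite_Un finite_subset)
      have Bsub: "B \<subseteq> \<Union>(set bs)" using i4 Bin by auto
      have lj: "last (ss @ tl ys) = C" using last_join[OF i1 y1] y2 y3 B_def by simp
      have Cin: "C \<in> set (ss @ tl ys)"
        using lj i1 by (metis append_is_Nil_conv last_in_set)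
      let ?s = "ss @ tl ys"
      have sset: "set ?s \<subseteq> set ss \<union> set ys" using set_join i1 by blast
      show ?thesis
      proof (intro exI[of _ ?s] exI[of _ "length bs"] conjI allI impI ballI)
        show "?s \<noteq> []" using i1 by simp
        show "successively stp ?s" using i1 i2 y1 y2 y4 B_def by (intro succ_join) auto
        show "card (hd ?s) = 1" using i1 i3 by (simp add: hd_join)
        fix X assume "X \<in> set ?s"
        then have XX: "X \<in> set ss \<or> X \<in> set ys" using sset by auto
        then show "X \<noteq> {}" "finite X" "card X \<le> k+1"
          using i4 y5 fys by auto
        have "X \<subseteq> \<Union>(set bs) \<union> C" using XX i4 y5 Bsub by blast
        then show "X \<subseteq> \<Union>(set (bs @ [C]))" by (simp add: Un_commute)
      next
        show "\<Union>(set ?s) = \<Union>(set (bs @ [C]))"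
        proof
          have "\<forall>X\<in>set ?s. X \<subseteq> \<Union>(set bs) \<union> C" using sset i4 y5 Bsub by blast
          then show "\<Union>(set ?s) \<subseteq> \<Union>(set (bs @ [C]))" by auto
          have "set ss \<subseteq> set ?s" by simp
          then show "\<Union>(set (bs @ [C])) \<subseteq> \<Union>(set ?s)" using i5 Cin by auto
        qed
      next
        fix X assume "X \<in> set (bs @ [C])" "X \<noteq> {}"
        then show "X \<in> set ?s" using i6 Cin by auto
      next
        fix v
        show "cnv ?s v"
        proof (rule cnv_join)
          have "\<forall>X\<in>set ss. X \<subseteq> \<Union>(set bs)" "\<forall>Y\<in>set ys. Y \<subseteq> B \<union> C" using i4 y5 by auto
          note h = this
          show "v \<in> last ss \<or> \<not>(\<exists>X\<in>set ss. v\<in>X) \<or> \<not>(\<exists>Y\<in>set ys. v\<in>Y)"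
          proof (cases "\<exists>X\<in>set ss. v\<in>X")
            case True
            then have "v \<in> \<Union>(set bs)" using h(1) by blast
            then have k: "v \<in> C \<Longrightarrow> v \<in> B" using key by blast
            show ?thesis
            proof (cases "v \<in> B")
              case True then show ?thesis using B_def by simp
            next
              case False
              then have "v \<notin> B \<union> C" using k by blast
              then show ?thesis using h(2) by blast
            qed
          next
            case False then show ?thesis by blast
          qed
        qed (use i1 y1 y2 B_def i7 y6 in auto)
      next
        show "length bs < length (bs @ [C])" by simp
        show "last ?s = (bs @ [C]) ! length bs" using lj by simp
      next
        fix i assume "length bs < i \<and> i < length (bs @ [C])"
        then have "i < Suc (length bs)" "length bs < i" by simp_all
        then show "(bs @ [C]) ! i = {}" by linarith
      qed
    qed
  qed
qed

lemma incoming_iff: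
  assumes "ss \<noteq> []" "successively stp ss" "card (ss ! 0) = 1"
  shows "incoming ss i v \<longleftrightarrow> i < length ss \<and> v \<in> ss ! i \<and> (i = 0 \<or> v \<notin> ss ! (i - 1))"
proof (cases i)
  case 0
  have "ss ! 0 = {v} \<longleftrightarrow> v \<in> ss ! 0" using assms(3) by (metis card_1_singletonE singletonD singletonI)
  then show ?thesis using 0 assms(1) unfolding incoming_def by auto
next
  case (Suc n)
  show ?thesis
  proof
    assume "incoming ss i v" then show "i < length ss \<and> v \<in> ss ! i \<and> (i = 0 \<or> v \<notin> ss ! (i - 1))"
      unfolding incoming_def using Suc by auto
  next
    assume h: "i < length ss \<and> v \<in> ss ! i \<and> (i = 0 \<or> v \<notin> ss ! (i - 1))"
    have "stp (ss ! n) (ss ! Suc n)" using assms(2) h Suc by (simp add: successively_nth)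
    then obtain u where u: "(u \<notin> ss ! n \<and> ss ! Suc n = insert u (ss ! n)) \<or> (u \<notin> ss ! Suc n \<and> ss ! n = insert u (ss ! Suc n))"
      unfolding stp_def by blast
    then show "incoming ss i v" using h Suc unfolding incoming_def by auto
  qed
qed

lemma count_iff:
  assumes "ss \<noteq> []" "successively stp ss" "card (ss ! 0) = 1"
  shows "card {i. i < length ss \<and> incoming ss i v} = 1 \<longleftrightarrow> (\<exists>i<length ss. v \<in> ss ! i) \<and> cnv ss v"
proof -
  let ?S = "{i. i < length ss \<and> v \<in> ss ! i \<and> (i = 0 \<or> v \<notin> ss ! (i - 1))}"
  have eq: "{i. i < length ss \<and> incoming ss i v} = ?S" using incoming_iff[OF assms] by auto
  have least_in: "(LEAST i. i < length ss \<and> v \<in> ss ! i) \<in> ?S" if "\<exists>i<length ss. v \<in> ss ! i"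
  proof -
    let ?m = "LEAST i. i < length ss \<and> v \<in> ss ! i"
    have m: "?m < length ss \<and> v \<in> ss ! ?m" by (rule LeastI_ex) (use that in blast)
    have "v \<notin> ss ! (?m - 1)" if "?m \<noteq> 0"
    proof
      assume "v \<in> ss ! (?m - 1)"
      then have "?m \<le> ?m - 1" using m by (intro Least_le) auto
      then show False using that by simp
    qed
    then show ?thesis using m by auto
  qed
  show ?thesis unfolding eq
  proof
    assume c: "card ?S = 1"
    then obtain m where Sm: "?S = {m}" by (meson card_1_singletonE)
    then have "m \<in> ?S" by auto
    then have ex: "\<exists>i<length ss. v \<in> ss ! i" by auto
    have cv: "cnv ss v" unfolding cnv_def
    proof (intro allI impI)
      fix s t u assume h: "s \<le> t \<and> t \<le> u \<and> u < length ss \<and> v \<in> ss ! s \<and> v \<in> ss ! u"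
      show "v \<in> ss ! t"
      proof (rule ccontr)
        assume nt: "v \<notin> ss ! t"
        let ?a = "LEAST i. i < length ss \<and> v \<in> ss ! i"
        have a: "?a \<in> ?S" using least_in ex by blast
        have as: "?a \<le> s" using h by (intro Least_le) auto
        let ?b = "LEAST i. t < i \<and> i < length ss \<and> v \<in> ss ! i"
        have tu: "t < u" using h nt by (cases "t = u") auto
        have pu: "t < u \<and> u < length ss \<and> v \<in> ss ! u" using h tu by simp
        have b: "t < ?b \<and> ?b < length ss \<and> v \<in> ss ! ?b"
          by (rule LeastI[of "\<lambda>i. t < i \<and> i < length ss \<and> v \<in> ss ! i" u, OF pu])
        have "v \<notin> ss ! (?b - 1)"
        proof
          assume vb: "v \<in> ss ! (?b - 1)"
          show False
          proof (cases "?b - 1 = t")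
            case True then show False using vb nt by simp
          next
            case False
            then have "t < ?b - 1" using b by auto
            then have "?b \<le> ?b - 1" using vb b by (intro Least_le) auto
            then show False using b by (cases "?b") auto
          qed
        qed
        then have bS: "?b \<in> ?S" using b by auto
        have ab: "?a < ?b" using as h b by auto
        have Sm': "\<And>i. i \<in> ?S \<Longrightarrow> i = m" using Sm by blast
        show False using Sm'[OF a] Sm'[OF bS] ab by simp
      qed
    qed
    show "(\<exists>i<length ss. v \<in> ss ! i) \<and> cnv ss v" using ex cv by blast
  next
    assume h: "(\<exists>i<length ss. v \<in> ss ! i) \<and> cnv ss v"
    let ?m = "LEAST i. i < length ss \<and> v \<in> ss ! i"
    have "?S = {?m}"
    proof
      show "{?m} \<subseteq> ?S" using least_in h by auto
      show "?S \<subseteq> {?m}"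
      proof
        fix i assume i: "i \<in> ?S"
        have mi: "?m \<le> i" using i by (intro Least_le) auto
        have m: "?m < length ss \<and> v \<in> ss ! ?m" using least_in h by auto
        show "i \<in> {?m}"
        proof (rule ccontr)
          assume "i \<notin> {?m}"
          then have "?m < i" using mi by auto
          then have "?m \<le> i - 1" "i - 1 \<le> i" "i < length ss" "v \<in> ss ! i" using i by auto
          then have "v \<in> ss ! (i - 1)" using h m unfolding cnv_def by blast
          then show False using i \<open>?m < i\<close> by auto
        qed
      qed
    qed
    then show "card ?S = 1" by simp
  qed
qed

lemma walk_steps: "(\<forall>i. Suc i < length ss \<longrightarrow>
        (\<exists>u. (u \<notin> ss ! i \<and> ss ! Suc i = insert u (ss ! i)) \<or>
             (u \<notin> ss ! Suc i \<and> ss ! i = insert u (ss ! Suc i)))) \<longleftrightarrow> successively stp ss"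
  unfolding successively_conv_nth stp_def by blast

theorem proposition4:
  fixes V :: "'a set" and E :: "'a set set" and k :: nat
  assumes "graph V E" and "V \<noteq> {}" and "k \<ge> 1"
  shows "has_path_decomposition_of_width_le V E k \<longleftrightarrow>
         (\<exists>ss. simplicial_walk V k ss \<and> decomposing V E ss)"
proof
  assume "has_path_decomposition_of_width_le V E k"
  then obtain bs where pd: "path_decomposition V E bs" and cb: "\<forall>t<length bs. card (bs ! t) \<le> k + 1"
    unfolding has_path_decomposition_of_width_le_def by blast
  have pdp2: "\<forall>t<length bs. bs ! t \<subseteq> V" using pd unfolding path_decomposition_def by (elim conjE) assumption
  have pdp3: "\<forall>e\<in>E. \<exists>t<length bs. e \<subseteq> bs ! t" using pd unfolding path_decomposition_def by (elim conjE) assumption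
  have pdp4: "\<forall>v\<in>V. (\<exists>t<length bs. v \<in> bs ! t) \<and>
        (\<forall>s t u. s \<le> t \<and> t \<le> u \<and> u < length bs \<and> v \<in> bs ! s \<and> v \<in> bs ! u \<longrightarrow> v \<in> bs ! t)"
    using pd unfolding path_decomposition_def by (elim conjE) assumption
  have fV: "finite V" using assms(1) unfolding graph_def by blast
  have sub: "\<forall>X\<in>set bs. X \<subseteq> V"
  proof
    fix X assume "X \<in> set bs"
    then obtain i where "i < length bs" "X = bs ! i" by (auto simp: in_set_conv_nth)
    then show "X \<subseteq> V" using pdp2 by blast
  qed
  have fb: "\<forall>X\<in>set bs. finite X \<and> card X \<le> k+1" using sub fV cb by (auto simp: in_set_conv_nth intro: finite_subset)
  have cnvb: "\<forall>v. cnv bs v"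
  proof
    fix v show "cnv bs v"
    proof (cases "v \<in> V")
      case True then show ?thesis using pdp4 unfolding cnv_def by blast
    next
      case False then show ?thesis using sub unfolding cnv_def by (meson nth_mem subsetD)
    qed
  qed
  have UV: "\<Union>(set bs) = V"
  proof
    show "\<Union>(set bs) \<subseteq> V" using sub by auto
    show "V \<subseteq> \<Union>(set bs)"
    proof
      fix v assume "v \<in> V"
      then obtain t where "t < length bs" "v \<in> bs ! t" using pdp4 by blast
      then show "v \<in> \<Union>(set bs)" using nth_mem by blast
    qed
  qed
  then have "\<Union>(set bs) \<noteq> {}" using assms(2) by simp
  then obtain ss j where ss: "ss \<noteq> [] \<and> successively stp ss \<and> card (hd ss) = 1 \<and>
    (\<forall>X\<in>set ss. X \<noteq> {} \<and> finite X \<and> card X \<le> k+1 \<and> X \<subseteq> \<Union>(set bs)) \<and> \<Union>(set ss) = \<Union>(set bs) \<and>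
    (\<forall>X\<in>set bs. X \<noteq> {} \<longrightarrow> X \<in> set ss) \<and> (\<forall>v. cnv ss v)"
    using build[OF cnvb fb assms(3)] by blast
  have ssn1: "ss \<noteq> []" using ss by (elim conjE) assumption
  have ssn2: "card (hd ss) = 1" using ss by (elim conjE) assumption
  note ssn = ssn1 ssn2
  have sst: "successively stp ss" using ss by (elim conjE) assumption
  have ssX: "\<forall>X\<in>set ss. X \<noteq> {} \<and> finite X \<and> card X \<le> k+1 \<and> X \<subseteq> \<Union>(set bs)" using ss by (elim conjE) assumption
  have ssU: "\<Union>(set ss) = \<Union>(set bs)" using ss by (elim conjE) assumption
  have ssB: "\<forall>X\<in>set bs. X \<noteq> {} \<longrightarrow> X \<in> set ss" using ss by (elim conjE) assumption
  have ssC: "\<forall>v. cnv ss v" using ss by (elim conjE) assumption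
  have c0: "card (ss ! 0) = 1" using ssn by (metis hd_conv_nth)
  have sw: "simplicial_walk V k ss"
    unfolding simplicial_walk_def walk_steps using ssn sst ssX c0 UV by (auto simp: nth_mem)
  have dec: "decomposing V E ss"
    unfolding decomposing_def
  proof (intro conjI ballI)
    fix v assume "v \<in> V"
    then have "v \<in> \<Union>(set ss)" using ssU UV by simp
    then have ex: "\<exists>i<length ss. v \<in> ss ! i" by (auto simp: in_set_conv_nth)
    show "card {i. i < length ss \<and> incoming ss i v} = 1"
      by (rule count_iff[OF ssn(1) sst c0, THEN iffD2]) (use ex ssC in blast)
  next
    fix e assume e: "e \<in> E"
    then obtain t where t: "t < length bs" "e \<subseteq> bs ! t" using pdp3 by blast
    have "e \<noteq> {}" using e assms(1) unfolding graph_def by force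
    then have "bs ! t \<in> set ss" using t ssB nth_mem by blast
    then show "\<exists>i<length ss. e \<subseteq> ss ! i" using t by (auto simp: in_set_conv_nth)
  qed
  show "\<exists>ss. simplicial_walk V k ss \<and> decomposing V E ss" using sw dec by blast
next
  assume "\<exists>ss. simplicial_walk V k ss \<and> decomposing V E ss"
  then obtain ss where sw: "simplicial_walk V k ss" and dec: "decomposing V E ss" by blast
  have ne: "ss \<noteq> []" and st: "successively stp ss" and c0: "card (ss ! 0) = 1"
    using sw unfolding simplicial_walk_def walk_steps by auto
  have pd: "path_decomposition V E ss"
    unfolding path_decomposition_def
  proof (intro conjI ballI allI impI)
    show "ss \<noteq> []" by (rule ne)
    fix t assume "t < length ss" then show "ss ! t \<subseteq> V" using sw unfolding simplicial_walk_def by blast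
  next
    fix e assume "e \<in> E" then show "\<exists>t<length ss. e \<subseteq> ss ! t" using dec unfolding decomposing_def by blast
  next
    fix v assume "v \<in> V"
    then have "(\<exists>i<length ss. v \<in> ss ! i) \<and> cnv ss v"
      using dec count_iff[OF ne st c0, of v] unfolding decomposing_def by blast
    then show "\<exists>t<length ss. v \<in> ss ! t" by blast
    fix s t u assume "s \<le> t \<and> t \<le> u \<and> u < length ss \<and> v \<in> ss ! s \<and> v \<in> ss ! u"
    then show "v \<in> ss ! t" using \<open>(\<exists>i<length ss. v \<in> ss ! i) \<and> cnv ss v\<close> unfolding cnv_def by blast
  qed
  show "has_path_decomposition_of_width_le V E k"
    unfolding has_path_decomposition_of_width_le_def
    using pd sw unfolding simplicial_walk_def by blast
qed

end
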